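(* Let $(X,d)$ be a compact metric space of finite covering dimension, $f_{0,\infty}=\{f_n\}_{n=0}^\infty$ a sequence of continuous self-maps of $X$, and $\mu$ a Borel probability measure on $X$ that is $f_{0,\infty}$-invariant. Then for any $A\in\mathcal{S}$, $h_{A}(f_{0,\infty})\geq h_{A,\mu}(f_{0,\infty})$.
   Context: $f_i^n=f_{i+n-1}\circ\cdots\circ f_i$, $f_i^0=\mathrm{id}$, $f_i^{-n}(B)=(f_i^n)^{-1}(B)$. $\mathcal S$ is the set of strictly increasing sequences $A=\{a_i\}_{i\ge1}$ of nonnegative integers. Topological sequence entropy: $h_A(f_{0,\infty})=\sup_{\mathscr A}\limsup_{n\to\infty}\frac1n\log\mathcal N(\bigvee_{i=1}^n f_0^{-a_i}\mathscr A)$ over finite open covers $\mathscr A$, where $\bigvee$ denotes common refinement, $f_0^{-a}\mathscr A=\{f_0^{-a}U:U\in\mathscr A\}$, $\mathcal N$ the minimal cardinality of a subcover, and $\log$ the natural logarithm. $\mu$ is $f_{0,\infty}$-invariant if $\mu(f_n^{-1}B)=\mu(B)$ for all Borel $B$ and $n\ge0$. Measure-theoretic sequence entropy: for a finite Borel partition $\xi$, $h_{A,\mu}(f_{0,\infty},\xi)=\limsup_{n\to\infty}\frac1nH_\mu(\bigvee_{i=1}^n f_0^{-a_i}\xi)$ with $H_\mu(\eta)=-\sum_{C\in\eta}\mu(C)\ln\mu(C)$, and $h_{A,\mu}(f_{0,\infty})=\sup_\xi h_{A,\mu}(f_{0,\infty},\xi)$ over finite Borel partitions. *)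

theory Defs
  imports "HOL-Probability.Probability"
begin

fun fcomp :: "(nat \<Rightarrow> 'a \<Rightarrow> 'a) \<Rightarrow> nat \<Rightarrow> nat \<Rightarrow> 'a \<Rightarrow> 'a" where
  "fcomp f i 0 = id"
| "fcomp f i (Suc n) = f (i + n) \<circ> fcomp f i n"

definition finite_open_cover :: "'a::topological_space set set \<Rightarrow> bool" where
  "finite_open_cover \<U> \<longleftrightarrow> finite \<U> \<and> (\<forall>U\<in>\<U>. open U) \<and> \<Union>\<U> = UNIV"

definition covering_dim_le :: "nat \<Rightarrow> 'a::topological_space itself \<Rightarrow> bool" where
  "covering_dim_le n _ \<longleftrightarrow>
     (\<forall>\<U>::'a set set. finite_open_cover \<U> \<longrightarrow>
        (\<exists>\<V>. finite_open_cover \<V> \<and> (\<forall>V\<in>\<V>. \<exists>U\<in>\<U>. V \<subseteq> U)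
             \<and> (\<forall>x. card {V\<in>\<V>. x \<in> V} \<le> n + 1)))"

definition finite_covering_dim :: "'a::topological_space itself \<Rightarrow> bool" where
  "finite_covering_dim T \<longleftrightarrow> (\<exists>n. covering_dim_le n T)"

definition join_fam :: "(nat \<Rightarrow> 'a set set) \<Rightarrow> nat set \<Rightarrow> 'a set set" where
  "join_fam C I = {\<Inter>i\<in>I. U i | U. \<forall>i\<in>I. U i \<in> C i}"

definition preimage_coll :: "('a \<Rightarrow> 'a) \<Rightarrow> 'a set set \<Rightarrow> 'a set set" where
  "preimage_coll g \<A> = (\<lambda>U. g -` U) ` \<A>"

definition min_subcover_card :: "'a set set \<Rightarrow> nat" where
  "min_subcover_card \<C> = Min {card \<V> | \<V>. \<V> \<subseteq> \<C> \<and> \<Union>\<V> = UNIV}"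

text \<open>Topological sequence entropy h_A(f_{0,\<infinity>}), sequence a indexed from 1.\<close>
definition top_seq_entropy :: "(nat \<Rightarrow> nat) \<Rightarrow> (nat \<Rightarrow> 'a::topological_space \<Rightarrow> 'a) \<Rightarrow> ereal" where
  "top_seq_entropy a f =
     (SUP \<A>\<in>{\<A>. finite_open_cover \<A>}.
        limsup (\<lambda>n. ereal (ln (real (min_subcover_card
           (join_fam (\<lambda>i. preimage_coll (fcomp f 0 (a i)) \<A>) {1..n}))) / real n)))"

definition finite_borel_partition :: "'a::topological_space set set \<Rightarrow> bool" where
  "finite_borel_partition \<xi> \<longleftrightarrow> finite \<xi> \<and> (\<forall>C\<in>\<xi>. C \<in> sets borel \<and> C \<noteq> {})
     \<and> disjoint \<xi> \<and> \<Union>\<xi> = UNIV"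

definition part_entropy :: "'a measure \<Rightarrow> 'a set set \<Rightarrow> real" where
  "part_entropy \<mu> \<eta> = - (\<Sum>C\<in>\<eta>. measure \<mu> C * ln (measure \<mu> C))"

definition meas_seq_entropy :: "(nat \<Rightarrow> nat) \<Rightarrow> 'a::topological_space measure \<Rightarrow> (nat \<Rightarrow> 'a \<Rightarrow> 'a) \<Rightarrow> ereal" where
  "meas_seq_entropy a \<mu> f =
     (SUP \<xi>\<in>{\<xi>. finite_borel_partition \<xi>}.
        limsup (\<lambda>n. ereal (part_entropy \<mu>
           (join_fam (\<lambda>i. preimage_coll (fcomp f 0 (a i)) \<xi>) {1..n}) / real n)))"

end

theory Submission
  imports Defs
begin



lemma closed_open_approx:
  fixes M :: "'a::metric_space measure"
  assumes fm: "finite_measure M" and sb: "sets M = sets borel" and B: "B \<in> sets borel"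
  shows "\<forall>e>0. \<exists>F G. closed F \<and> open G \<and> F \<subseteq> B \<and> B \<subseteq> G \<and> measure M (G - F) < e"
proof -
  interpret finite_measure M by fact
  have spM: "space M = UNIV" using sets_eq_imp_space_eq[OF sb] by simp
  have Bs: "B \<in> sigma_sets UNIV (Collect closed)"
    using B by (simp add: borel_eq_closed)
  show ?thesis using Bs
  proof (induct rule: sigma_sets.induct)
    case (Basic A)
    then have cA: "closed A" by simp
    show ?case
    proof (intro allI impI)
      fix e :: real assume e: "e > 0"
      show "\<exists>F G. closed F \<and> open G \<and> F \<subseteq> A \<and> A \<subseteq> G \<and> measure M (G - F) < e"
      proof (cases "A = {}")
        case True then show ?thesis using e by (intro exI[of _ "{}"] exI[of _ "{}"]) auto
      next
        case False
        define G where "G n = (\<Union>a\<in>A. ball a (1 / Suc n))" for n :: nat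
        have oG: "open (G n)" for n unfolding G_def by auto
        have AG: "A \<subseteq> G n" for n unfolding G_def by force
        have decI: "G n \<subseteq> G m" if "m \<le> n" for m n
        proof
          fix x assume "x \<in> G n"
          then obtain y where y: "y \<in> A" "dist y x < 1 / Suc n" unfolding G_def by auto
          moreover have "1 / real (Suc n) \<le> 1 / Suc m" using that by (simp add: frac_le)
          ultimately have "dist y x < 1 / Suc m" by linarith
          then show "x \<in> G m" using y(1) unfolding G_def by auto
        qed
        then have dec: "decseq G" by (simp add: decseq_def)
        have inter: "(\<Inter>n. G n) = A"
        proof
          show "(\<Inter>n. G n) \<subseteq> A"
          proof
            fix x assume x: "x \<in> (\<Inter>n. G n)"
            have "\<forall>\<epsilon>>0. \<exists>y\<in>A. dist y x < \<epsilon>"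
            proof (intro allI impI)
              fix \<epsilon> :: real assume "\<epsilon> > 0"
              then obtain n where n: "1 / Suc n < \<epsilon>" using nat_approx_posE by blast
              from x have "x \<in> G n" by auto
              then obtain y where "y \<in> A" "dist y x < 1 / Suc n" unfolding G_def by auto
              then show "\<exists>y\<in>A. dist y x < \<epsilon>" using n by (meson order.strict_trans)
            qed
            then show "x \<in> A" using closed_approachable[OF cA] by blast
          qed
        qed (use AG in auto)
        have "(\<lambda>n. measure M (G n)) \<longlonglongrightarrow> measure M (\<Inter>n. G n)"
          by (rule finite_Lim_measure_decseq) (use oG sb dec in auto)
        then have "(\<lambda>n. measure M (G n)) \<longlonglongrightarrow> measure M A" using inter by simp
        then obtain n0 where "\<forall>n\<ge>n0. dist (measure M (G n)) (measure M A) < e"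
          using e unfolding lim_sequentially by meson
        then have n: "\<bar>measure M (G n0) - measure M A\<bar> < e"
          by (auto simp: dist_real_def)
        define n where "n = n0"
        note n = n[folded n_def]
        have Gs: "G n \<in> sets M" using oG[of n] sb by simp
        have As: "A \<in> sets M" using cA sb by simp
        have "measure M (G n - A) = measure M (G n) - measure M A"
          by (rule finite_measure_Diff[OF Gs As AG])
        then have "measure M (G n - A) < e" using n by linarith
        then show ?thesis using oG[of n] AG[of n] cA by blast
      qed
    qed
  next
    case Empty
    then show ?case by (intro allI impI exI[of _ "{}"] exI[of _ "{}"]) auto
  next
    case (Compl A)
    show ?case
    proof (intro allI impI)
      fix e :: real assume "e > 0"
      then have "\<exists>F G. closed F \<and> open G \<and> F \<subseteq> A \<and> A \<subseteq> G \<and> measure M (G - F) < e"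
        using Compl(2) by simp
      then obtain F G where "closed F" "open G" "F \<subseteq> A" "A \<subseteq> G" "measure M (G - F) < e"
        by blast
      moreover have "(UNIV - F) - (UNIV - G) = G - F" by auto
      ultimately show "\<exists>F' G'. closed F' \<and> open G' \<and> F' \<subseteq> UNIV - A \<and> UNIV - A \<subseteq> G' \<and> measure M (G' - F') < e"
        by (intro exI[of _ "UNIV - G"] exI[of _ "UNIV - F"]) auto
    qed
  next
    case (Union A)
    have Ab: "A i \<in> sets M" for i
      using Union(1)[of i] sb by (simp add: borel_eq_closed)
    show ?case
    proof (intro allI impI)
      fix e :: real assume e: "e > 0"
      define d where "d i = e / 4 * (1/2)^i" for i :: nat
      have d0: "d i > 0" for i using e by (simp add: d_def)
      have "\<forall>i. \<exists>F G. closed F \<and> open G \<and> F \<subseteq> A i \<and> A i \<subseteq> G \<and> measure M (G - F) < d i"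
        using Union(2) d0 by blast
      then obtain F G where FG: "\<And>i. closed (F i)" "\<And>i. open (G i)" "\<And>i. F i \<subseteq> A i"
        "\<And>i. A i \<subseteq> G i" "\<And>i. measure M (G i - F i) < d i"
        by metis
      define D where "D N = (\<Union>i<N. A i)" for N
      have incD: "incseq D" unfolding incseq_def D_def by (intro allI impI UN_mono) auto
      have "(\<lambda>N. measure M (D N)) \<longlonglongrightarrow> measure M (\<Union>N. D N)"
        by (rule finite_Lim_measure_incseq[OF _ incD]) (use Ab in \<open>auto simp: D_def\<close>)
      moreover have "(\<Union>N. D N) = (\<Union>i. A i)" by (auto simp: D_def)
      ultimately have "(\<lambda>N. measure M (D N)) \<longlonglongrightarrow> measure M (\<Union>i. A i)" by simp
      then obtain N0 where N0: "\<forall>n\<ge>N0. dist (measure M (D n)) (measure M (\<Union>i. A i)) < e/2"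
        using e unfolding lim_sequentially by (meson half_gt_zero)
      then have N: "\<bar>measure M (D N0) - measure M (\<Union>i. A i)\<bar> < e/2"
        by (auto simp: dist_real_def)
      define N where "N = N0"
      note N = N[folded N_def]
      have DA: "D N \<subseteq> (\<Union>i. A i)" by (auto simp: D_def)
      have UAs: "(\<Union>i. A i) \<in> sets M" using Ab by auto
      have DNs: "D N \<in> sets M" using Ab by (auto simp: D_def)
      have m1: "measure M ((\<Union>i. A i) - D N) < e/2"
        using N finite_measure_Diff[OF UAs DNs DA] unfolding abs_less_iff by linarith
      define FF where "FF = (\<Union>i<N. F i)"
      define GG where "GG = (\<Union>i. G i)"
      have sub: "GG - FF \<subseteq> (\<Union>i. G i - F i) \<union> ((\<Union>i. A i) - D N)"
      proof
        fix x assume x: "x \<in> GG - FF"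
        then obtain i where xi: "x \<in> G i" by (auto simp: GG_def)
        show "x \<in> (\<Union>i. G i - F i) \<union> ((\<Union>i. A i) - D N)"
        proof (cases "x \<in> D N")
          case True
          then obtain j where "j < N" "x \<in> A j" by (auto simp: D_def)
          then have "x \<in> G j - F j" using FG(4) x by (auto simp: FF_def)
          then show ?thesis by blast
        next
          case False
          show ?thesis
          proof (cases "x \<in> F i")
            case True then have "x \<in> A i" using FG(3) by auto
            then show ?thesis using False by blast
          next
            case False2: False then show ?thesis using xi by blast
          qed
        qed
      qed
      have GFs: "G i - F i \<in> sets M" for i using FG(1,2) sb by auto
      have sumd: "d sums (e/4 * 2)"
        unfolding d_def using geometric_sums[of "1/2::real"] by (intro sums_mult) simp
      have summ: "summable (\<lambda>i. measure M (G i - F i))"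
        by (rule summable_comparison_test'[of d 0]) (use sumd FG(5) in \<open>auto intro: sums_summable less_imp_le\<close>)
      have "measure M (\<Union>i. G i - F i) \<le> (\<Sum>i. measure M (G i - F i))"
        by (rule finite_measure_subadditive_countably) (use GFs summ in auto)
      also have "\<dots> \<le> (\<Sum>i. d i)"
        by (rule suminf_le) (use FG(5) summ sumd in \<open>auto intro: less_imp_le sums_summable\<close>)
      also have "\<dots> = e/2" using sums_unique[OF sumd] by simp
      finally have m2: "measure M (\<Union>i. G i - F i) \<le> e/2" .
      have "measure M (GG - FF) \<le> measure M ((\<Union>i. G i - F i) \<union> ((\<Union>i. A i) - D N))"
        by (rule finite_measure_mono[OF sub]) (use GFs UAs DNs in auto)
      also have "\<dots> \<le> measure M (\<Union>i. G i - F i) + measure M ((\<Union>i. A i) - D N)"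
        by (rule measure_Un_le) (use GFs UAs DNs in auto)
      finally have "measure M (GG - FF) < e" using m1 m2 by linarith
      moreover have "closed FF" using FG(1) by (auto simp: FF_def)
      moreover have "open GG" using FG(2) by (auto simp: GG_def)
      moreover have "FF \<subseteq> (\<Union>i. A i)" using FG(3) by (auto simp: FF_def)
      moreover have "(\<Union>i. A i) \<subseteq> GG" using FG(4) by (auto simp: GG_def)
      ultimately show "\<exists>F G. closed F \<and> open G \<and> F \<subseteq> \<Union> (range A) \<and> \<Union> (range A) \<subseteq> G \<and> measure M (G - F) < e"
        by blast
    qed
  qed
qed



context information_space
begin

lemma ent_sum:
  assumes Y: "simple_function M Y" and S: "Y ` space M \<subseteq> S" "finite S"
  shows "\<H>(Y) = - (\<Sum>v\<in>S. prob (Y -` {v} \<inter> space M) * log b (prob (Y -` {v} \<inter> space M)))"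
proof -
  have "\<H>(Y) = - (\<Sum>v\<in>Y ` space M. prob (Y -` {v} \<inter> space M) * log b (prob (Y -` {v} \<inter> space M)))"
    by (rule entropy_simple_distributed[OF simple_distributedI[OF Y measure_nonneg refl]])
  also have "(\<Sum>v\<in>Y ` space M. prob (Y -` {v} \<inter> space M) * log b (prob (Y -` {v} \<inter> space M)))
    = (\<Sum>v\<in>S. prob (Y -` {v} \<inter> space M) * log b (prob (Y -` {v} \<inter> space M)))"
  proof (rule sum.mono_neutral_left[OF S(2) S(1)])
    show "\<forall>i\<in>S - Y ` space M. prob (Y -` {i} \<inter> space M) * log b (prob (Y -` {i} \<inter> space M)) = 0"
    proof
      fix i assume "i \<in> S - Y ` space M"
      then have "Y -` {i} \<inter> space M = {}" by auto
      then show "prob (Y -` {i} \<inter> space M) * log b (prob (Y -` {i} \<inter> space M)) = 0" by simp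
    qed
  qed
  finally show ?thesis .
qed

lemma ent_pair_le:
  assumes X: "simple_function M X" and Y: "simple_function M Y"
  shows "\<H>(\<lambda>x. (X x, Y x)) \<le> \<H>(X) + \<H>(Y)"
  using entropy_chain_rule[OF X Y] conditional_entropy_less_eq_entropy[OF Y X] by simp

lemma ent_const:
  shows "\<H>(\<lambda>x. c) = 0"
proof -
  have sf: "simple_function M (\<lambda>x. c)" by simp
  have "\<H>(\<lambda>x. c) = - (\<Sum>v\<in>{c}. prob ((\<lambda>x. c) -` {v} \<inter> space M) * log b (prob ((\<lambda>x. c) -` {v} \<inter> space M)))"
    by (rule ent_sum[OF sf]) auto
  also have "\<dots> = 0" by (simp add: prob_space)
  finally show ?thesis .
qed

lemma ent_vec:
  fixes Y :: "nat \<Rightarrow> 'a \<Rightarrow> 'b" and n :: nat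
  assumes Y: "\<And>i. simple_function M (Y i)"
  shows "simple_function M (\<lambda>x. restrict (\<lambda>i. Y i x) {1..n}) \<and>
         \<H>(\<lambda>x. restrict (\<lambda>i. Y i x) {1..n}) \<le> (\<Sum>i=1..n. \<H>(Y i))"
proof (induction n)
  case 0
  have eq: "(\<lambda>x. restrict (\<lambda>i. Y i x) {1..0}) = (\<lambda>x. restrict (\<lambda>i. undefined) {})"
    by (auto simp: restrict_def fun_eq_iff)
  show ?case unfolding eq using ent_const[of "restrict (\<lambda>i::nat. undefined::'b) {}"] by simp
next
  case (Suc n)
  let ?V = "\<lambda>x. restrict (\<lambda>i. Y i x) {1..n}"
  let ?P = "\<lambda>x. (?V x, Y (Suc n) x)"
  let ?F = "\<lambda>p. (fst p)(Suc n := snd p)"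
  have eq: "(\<lambda>x. restrict (\<lambda>i. Y i x) {1..Suc n}) = ?F \<circ> ?P"
    by (auto simp: restrict_def fun_eq_iff)
  have sV: "simple_function M ?V" using Suc.IH by blast
  have sP: "simple_function M ?P" using sV Y by (rule simple_function_Pair)
  have "\<H>(?F \<circ> ?P) \<le> \<H>(?P)" by (rule entropy_data_processing[OF sP])
  also have "\<dots> \<le> \<H>(?V) + \<H>(Y (Suc n))" by (rule ent_pair_le[OF sV Y])
  also have "\<dots> \<le> (\<Sum>i=1..n. \<H>(Y i)) + \<H>(Y (Suc n))" by (rule add_right_mono[OF conjunct2[OF Suc.IH]])
  also have "\<dots> = (\<Sum>i=1..Suc n. \<H>(Y i))" by simp
  finally show ?case unfolding eq using sP by (auto intro: simple_function_compose)
qed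

lemma ent_le_card:
  assumes X: "simple_function M X" and R: "X ` space M \<subseteq> {..<N}"
  shows "\<H>(X) \<le> log b (real N)"
proof -
  have "\<H>(X) \<le> log b (real (card (X ` space M)))"
    by (rule entropy_le_card[OF simple_distributedI[OF X measure_nonneg refl]])
  also have "\<dots> \<le> log b (real N)"
  proof -
    have "X ` space M \<noteq> {}" using not_empty by auto
    moreover have "finite (X ` space M)" using X by (auto simp: simple_function_def)
    ultimately have "card (X ` space M) > 0" by (simp add: card_gt_0_iff)
    moreover have "card (X ` space M) \<le> N" using card_mono[OF _ R] by simp
    ultimately show ?thesis using b_gt_1 by simp
  qed
  finally show ?thesis .
qed

end

lemma phi_small:
  fixes t :: real assumes "0 \<le> t" shows "- (t * ln t) \<le> 2 * sqrt t"
proof (cases "t = 0")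
  case True then show ?thesis by simp
next
  case False
  then have t: "t > 0" using assms by simp
  have s: "sqrt t > 0" using t by simp
  have "ln (1 / sqrt t) \<le> 1 / sqrt t - 1" by (rule ln_le_minus_one) (use s in simp)
  moreover have "ln (1 / sqrt t) = - ln t / 2" using t by (simp add: ln_div ln_sqrt)
  ultimately have "- ln t \<le> 2 / sqrt t" by simp
  then have "t * (- ln t) \<le> t * (2 / sqrt t)" using t by (intro mult_left_mono) auto
  also have "t * (2 / sqrt t) = 2 * sqrt t" using t
    by (metis real_div_sqrt less_imp_le times_divide_eq_right mult.commute)
  finally show ?thesis by simp
qed

lemma phi_near1:
  fixes s :: real assumes "0 \<le> s" "s \<le> 1" shows "- ((1 - s) * ln (1 - s)) \<le> s"
proof (cases "s = 1")
  case True then show ?thesis by simp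
next
  case False
  then have p: "1 - s > 0" using assms by simp
  have "ln (1 / (1 - s)) \<le> 1 / (1 - s) - 1" by (rule ln_le_minus_one) (use p in simp)
  then have "- ln (1 - s) \<le> 1 / (1 - s) - 1" using p by (simp add: ln_div)
  then have "(1 - s) * (- ln (1 - s)) \<le> (1 - s) * (1 / (1 - s) - 1)" using p by (intro mult_left_mono) auto
  also have "\<dots> = s" using p by (simp add: field_simps)
  finally show ?thesis by simp
qed

lemma closed_inner:
  fixes M :: "'a::metric_space measure"
  assumes fm: "finite_measure M" and sb: "sets M = sets borel" and B: "B \<in> sets borel" and e: "e > 0"
  shows "\<exists>F. closed F \<and> F \<subseteq> B \<and> measure M (B - F) < e"
proof -
  interpret finite_measure M by fact
  have ex: "\<exists>F G. closed F \<and> open G \<and> F \<subseteq> B \<and> B \<subseteq> G \<and> measure M (G - F) < e"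
    using mp[OF spec[OF closed_open_approx[OF fm sb B], of e] e] .
  obtain F G where FG: "closed F" "open G" "F \<subseteq> B" "B \<subseteq> G" "measure M (G - F) < e"
    using ex by (elim exE conjE)
  have Gs: "G - F \<in> sets M" using FG(1,2) sb by simp
  have "measure M (B - F) \<le> measure M (G - F)"
    by (rule finite_measure_mono[OF _ Gs]) (use FG(4) in blast)
  then have "measure M (B - F) < e" using FG(5) by linarith
  then show ?thesis using FG(1,3) by (intro exI[of _ F] conjI)
qed


definition lab :: "'a set set \<Rightarrow> 'a \<Rightarrow> 'a set" where
  "lab \<xi> y = (THE C. C \<in> \<xi> \<and> y \<in> C)"

lemma lab_eq:
  assumes P: "finite_borel_partition \<xi>" and C: "C \<in> \<xi>" "y \<in> C"
  shows "lab \<xi> y = C"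
  unfolding lab_def
proof (rule the_equality)
  show "C \<in> \<xi> \<and> y \<in> C" using C by simp
  fix C' assume C': "C' \<in> \<xi> \<and> y \<in> C'"
  show "C' = C"
  proof (rule ccontr)
    assume "C' \<noteq> C"
    then have "disjnt C' C" using P C C' unfolding finite_borel_partition_def pairwise_def by blast
    then show False using C C' by (auto simp: disjnt_def)
  qed
qed

lemma lab_in:
  assumes P: "finite_borel_partition \<xi>"
  shows "lab \<xi> y \<in> \<xi> \<and> y \<in> lab \<xi> y"
proof -
  have "y \<in> \<Union>\<xi>" using P by (simp add: finite_borel_partition_def)
  then obtain C where "C \<in> \<xi>" "y \<in> C" by blast
  then show ?thesis using lab_eq[OF P] by simp
qed

lemma lab_vimage:
  assumes P: "finite_borel_partition \<xi>"
  shows "lab \<xi> -` {C} = (if C \<in> \<xi> then C else {})"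
  using lab_eq[OF P] lab_in[OF P] by auto

lemma join_pre_D:
  assumes "D \<in> join_fam (\<lambda>i. preimage_coll (h i) C) I"
  shows "\<exists>W. (\<forall>i\<in>I. W i \<in> C) \<and> D = (\<Inter>i\<in>I. h i -` W i)"
proof -
  obtain Ui where Ui: "\<forall>i\<in>I. Ui i \<in> (\<lambda>U. h i -` U) ` C" "D = (\<Inter>i\<in>I. Ui i)"
    using assms unfolding join_fam_def preimage_coll_def by blast
  then have "\<forall>i\<in>I. \<exists>W. W \<in> C \<and> Ui i = h i -` W" by blast
  then obtain W where W: "\<And>i. i \<in> I \<Longrightarrow> W i \<in> C \<and> Ui i = h i -` W i" by metis
  have DW: "D = (\<Inter>i\<in>I. h i -` W i)" unfolding Ui(2) using W by (intro INF_cong) auto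
  show ?thesis
  proof (intro exI[of _ W] conjI)
    show "\<forall>i\<in>I. W i \<in> C" using W by blast
    show "D = (\<Inter>i\<in>I. h i -` W i)" by (fact DW)
  qed
qed

lemma join_pre_I:
  assumes "\<forall>i\<in>I. W i \<in> C"
  shows "(\<Inter>i\<in>I. h i -` W i) \<in> join_fam (\<lambda>i. preimage_coll (h i) C) I"
  unfolding join_fam_def preimage_coll_def
  using assms by (intro CollectI exI[of _ "\<lambda>i. h i -` W i"]) auto

lemma join_pre_D':
  assumes D: "D \<in> join_fam (\<lambda>i. preimage_coll (h i) C) I"
  shows "\<exists>W. W \<in> PiE I (\<lambda>_. C) \<and> D = (\<Inter>i\<in>I. h i -` W i)"
proof -
  obtain W where W: "\<forall>i\<in>I. W i \<in> C" "D = (\<Inter>i\<in>I. h i -` W i)"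
    using join_pre_D[OF D] by (elim exE conjE)
  have "D = (\<Inter>i\<in>I. h i -` (restrict W I) i)" unfolding W(2) by simp
  moreover have "restrict W I \<in> PiE I (\<lambda>_. C)" using W(1) by simp
  ultimately show ?thesis by blast
qed

lemma join_pre_finite:
  assumes "finite I" "finite C"
  shows "finite (join_fam (\<lambda>i. preimage_coll (h i) C) I)"
proof -
  have sub: "join_fam (\<lambda>i. preimage_coll (h i) C) I \<subseteq> (\<lambda>W. \<Inter>i\<in>I. h i -` W i) ` (PiE I (\<lambda>_. C))"
  proof
    fix D assume D: "D \<in> join_fam (\<lambda>i. preimage_coll (h i) C) I"
    obtain W where W: "W \<in> PiE I (\<lambda>_. C)" "D = (\<Inter>i\<in>I. h i -` W i)"
      using join_pre_D'[OF D] by (elim exE conjE)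
    show "D \<in> (\<lambda>W. \<Inter>i\<in>I. h i -` W i) ` (PiE I (\<lambda>_. C))" by (rule image_eqI[where f="\<lambda>W. \<Inter>i\<in>I. h i -` W i", OF W(2) W(1)])
  qed
  have "finite (PiE I (\<lambda>_. C))" by (rule finite_PiE) (use assms in auto)
  then show ?thesis by (rule finite_subset[OF sub finite_imageI])
qed

lemma join_pre_cover:
  assumes "\<Union>C = UNIV"
  shows "\<Union>(join_fam (\<lambda>i. preimage_coll (h i) C) I) = UNIV"
proof -
  have "x \<in> \<Union>(join_fam (\<lambda>i. preimage_coll (h i) C) I)" for x
  proof -
    have "\<forall>i. \<exists>W. W \<in> C \<and> h i x \<in> W" using assms by blast
    then obtain W where W: "\<forall>i. W i \<in> C \<and> h i x \<in> W i" by metis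
    have "(\<Inter>i\<in>I. h i -` W i) \<in> join_fam (\<lambda>i. preimage_coll (h i) C) I"
      by (rule join_pre_I) (use W in blast)
    moreover have "x \<in> (\<Inter>i\<in>I. h i -` W i)" using W by auto
    ultimately show ?thesis by blast
  qed
  then show ?thesis by blast
qed

lemma join_pre_open:
  assumes "finite I" "\<forall>U\<in>C. open U" "\<And>i. continuous_on UNIV (h i)"
    and "D \<in> join_fam (\<lambda>i. preimage_coll (h i) C) I"
  shows "open D"
proof -
  obtain W where W: "\<forall>i\<in>I. W i \<in> C" "D = (\<Inter>i\<in>I. h i -` W i)" using join_pre_D[OF assms(4)] by blast
  show ?thesis unfolding W(2) using assms(1,2,3) W(1) by (intro open_INT) (auto intro: open_vimage)
qed

lemma min_subcover_obtain:
  assumes "finite \<C>" "\<Union>\<C> = UNIV"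
  shows "\<exists>\<V>. \<V> \<subseteq> \<C> \<and> \<Union>\<V> = UNIV \<and> card \<V> = min_subcover_card \<C>"
proof -
  define S where "S = {card \<V> | \<V>. \<V> \<subseteq> \<C> \<and> \<Union>\<V> = UNIV}"
  have "S \<subseteq> card ` Pow \<C>"
  proof
    fix x assume "x \<in> S"
    then obtain V where "x = card V" "V \<subseteq> \<C>" unfolding S_def by blast
    then show "x \<in> card ` Pow \<C>" by simp
  qed
  then have "finite S" using assms(1) finite_subset by blast
  moreover have "card \<C> \<in> S" unfolding S_def
    by (rule CollectI, rule exI[of _ \<C>]) (simp add: assms(2))
  then have "S \<noteq> {}" by blast
  ultimately have "Min S \<in> S" by (rule Min_in)
  then obtain V where V: "Min S = card V" "V \<subseteq> \<C>" "\<Union>V = UNIV" unfolding S_def by blast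
  have "min_subcover_card \<C> = Min S" unfolding min_subcover_card_def S_def by simp
  then show ?thesis using V by (intro exI[of _ V]) simp
qed

lemma restrict_eq_iff: "restrict f I = restrict g I \<longleftrightarrow> (\<forall>i\<in>I. f i = g i)"
  by (metis restrict_apply' restrict_ext)

lemma limsup_step:
  fixes h t :: "nat \<Rightarrow> real" and \<epsilon> :: real
  assumes ht: "\<And>n. h n \<le> t n + real n * \<epsilon>" and e: "\<epsilon> \<ge> 0"
  shows "limsup (\<lambda>n. ereal (h n / real n)) \<le> limsup (\<lambda>n. ereal (t n / real n)) + ereal \<epsilon>"
proof -
  have pt: "ereal (h n / real n) \<le> ereal (t n / real n) + ereal \<epsilon>" for n
  proof (cases "n = 0")
    case True then show ?thesis using e by simp
  next
    case False
    then have np: "real n > 0" by simp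
    have "h n / real n \<le> (t n + real n * \<epsilon>) / real n" using ht[of n] np by (simp add: divide_right_mono)
    also have "\<dots> = t n / real n + \<epsilon>" using np by (simp add: field_simps)
    finally show ?thesis by simp
  qed
  have "limsup (\<lambda>n. ereal (h n / real n)) \<le> limsup (\<lambda>n. ereal (t n / real n) + ereal \<epsilon>)"
    by (intro Limsup_mono always_eventually allI pt)
  also have "\<dots> \<le> limsup (\<lambda>n. ereal (t n / real n)) + limsup (\<lambda>n. ereal \<epsilon>)"
    by (rule ereal_limsup_add_mono)
  also have "limsup (\<lambda>n. ereal \<epsilon>) = ereal \<epsilon>" by (simp add: Limsup_const)
  finally show ?thesis .
qed





locale seqent = information_space M "exp 1" for M :: "'a::metric_space measure" +
  fixes f :: "nat \<Rightarrow> 'a \<Rightarrow> 'a"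
  assumes sb: "sets M = sets borel"
    and cont: "\<And>n. continuous_on UNIV (f n)"
    and inv: "\<And>n B. B \<in> sets borel \<Longrightarrow> measure M (f n -` B) = measure M B"
begin

abbreviation Ent :: "('a \<Rightarrow> 'b) \<Rightarrow> real" where
  "Ent X \<equiv> entropy (exp 1) (count_space (X ` space M)) X"

lemma spM: "space M = UNIV"
  using sets_eq_imp_space_eq[OF sb] by simp

lemma fcomp_cont: "continuous_on UNIV (fcomp f i k)"
proof (induction k)
  case 0 then show ?case by (simp add: continuous_on_id)
next
  case (Suc k)
  have "continuous_on UNIV (f (i + k) \<circ> fcomp f i k)"
    by (rule continuous_on_compose[OF Suc.IH continuous_on_subset[OF cont subset_UNIV]])
  then show ?case by simp
qed

lemma fcomp_borel: "S \<in> sets borel \<Longrightarrow> fcomp f i k -` S \<in> sets borel"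
  using measurable_sets[OF borel_measurable_continuous_onI[OF fcomp_cont], of S] by simp

lemma fcomp_inv: "S \<in> sets borel \<Longrightarrow> measure M (fcomp f i k -` S) = measure M S"
proof (induction k arbitrary: S)
  case 0 then show ?case by simp
next
  case (Suc k)
  have b: "f (i + k) -` S \<in> sets borel"
    using measurable_sets[OF borel_measurable_continuous_onI[OF cont], of S] Suc.prems by simp
  have "fcomp f i (Suc k) -` S = fcomp f i k -` (f (i + k) -` S)" by auto
  then have "measure M (fcomp f i (Suc k) -` S) = measure M (f (i + k) -` S)"
    using Suc.IH[OF b] by simp
  also have "\<dots> = measure M S" using inv[OF Suc.prems] .
  finally show ?case .
qed

lemma sf_comp:
  assumes "finite (range h)" "\<And>v. h -` {v} \<in> sets borel" "\<And>S. S \<in> sets borel \<Longrightarrow> G -` S \<in> sets borel"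
  shows "simple_function M (\<lambda>x. h (G x))"
  unfolding simple_function_def
proof
  show "finite ((\<lambda>x. h (G x)) ` space M)"
    by (rule finite_subset[OF _ assms(1)]) auto
  show "\<forall>v\<in>(\<lambda>x. h (G x)) ` space M. (\<lambda>x. h (G x)) -` {v} \<inter> space M \<in> sets M"
  proof
    fix v
    have "(\<lambda>x. h (G x)) -` {v} \<inter> space M = G -` (h -` {v})" by (auto simp: spM)
    then show "(\<lambda>x. h (G x)) -` {v} \<inter> space M \<in> sets M" using assms(2,3) sb by simp
  qed
qed

lemma ent_eq_sum:
  assumes "simple_function M Y" "range Y \<subseteq> S" "finite S"
  shows "Ent Y = - (\<Sum>v\<in>S. prob (Y -` {v}) * ln (prob (Y -` {v})))"
proof -
  have sub: "Y ` space M \<subseteq> S" using assms(2) by (simp add: spM)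
  show ?thesis using ent_sum[OF assms(1) sub assms(3)] by (simp add: spM log_def)
qed

lemma main_ineq:
  fixes \<xi> :: "'a set set" and B :: "'a set \<Rightarrow> 'a set" and a :: "nat \<Rightarrow> nat" and n :: nat
    and B0 :: "'a set" and \<zeta> :: "'a \<Rightarrow> 'a set option"
  assumes P: "finite_borel_partition \<xi>"
    and Bc: "\<And>C. C \<in> \<xi> \<Longrightarrow> closed (B C)" and Bs: "\<And>C. C \<in> \<xi> \<Longrightarrow> B C \<subseteq> C"
    and B0: "B0 = UNIV - (\<Union>C\<in>\<xi>. B C)"
    and \<zeta>: "\<zeta> = (\<lambda>y. if y \<in> B0 then Some (lab \<xi> y) else None)"
  shows "part_entropy M (join_fam (\<lambda>i. preimage_coll (fcomp f 0 (a i)) \<xi>) {1..n})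
     \<le> ln (real (min_subcover_card (join_fam (\<lambda>i. preimage_coll (fcomp f 0 (a i)) ((\<lambda>C. B0 \<union> B C) ` \<xi>)) {1..n})))
        + real n * Ent \<zeta>"
proof -
  define g where "g i = fcomp f 0 (a i)" for i
  define I where "I = {1..n}"
  define U where "U = (\<lambda>C. B0 \<union> B C) ` \<xi>"
  have fin\<xi>: "finite \<xi>" and Cb: "\<And>C. C \<in> \<xi> \<Longrightarrow> C \<in> sets borel" and cov: "\<Union>\<xi> = UNIV"
    using P by (auto simp: finite_borel_partition_def)
  have finI: "finite I" by (simp add: I_def)
  have \<zeta>y: "\<And>y. \<zeta> y = (if y \<in> B0 then Some (lab \<xi> y) else None)" using \<zeta> by simp
  have gB: "\<And>i S. S \<in> sets borel \<Longrightarrow> g i -` S \<in> sets borel" by (simp add: g_def fcomp_borel)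
  have gI: "\<And>i S. S \<in> sets borel \<Longrightarrow> prob (g i -` S) = prob S" by (simp add: g_def fcomp_inv)
  have gC: "\<And>i. continuous_on UNIV (g i)" by (simp add: g_def fcomp_cont)
  have clU: "closed (\<Union>C\<in>\<xi>. B C)" using fin\<xi> Bc by (intro closed_UN) auto
  have B0eq: "B0 = - (\<Union>C\<in>\<xi>. B C)" unfolding B0 by blast
  have B0b: "B0 \<in> sets borel" unfolding B0eq using open_Compl[OF clU] by (rule borel_open)
  have \<zeta>v: "\<zeta> -` {v} \<in> sets borel" for v
  proof (cases v)
    case None
    have "\<zeta> -` {v} = UNIV - B0"
    proof (rule set_eqI)
      fix y show "y \<in> \<zeta> -` {v} \<longleftrightarrow> y \<in> UNIV - B0" using None by (simp add: \<zeta>y)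
    qed
    then show ?thesis using B0b by simp
  next
    case (Some C)
    have "\<zeta> -` {v} = B0 \<inter> lab \<xi> -` {C}"
    proof (rule set_eqI)
      fix y show "y \<in> \<zeta> -` {v} \<longleftrightarrow> y \<in> B0 \<inter> lab \<xi> -` {C}" using Some by (simp add: \<zeta>y)
    qed
    then show ?thesis using B0b Cb lab_vimage[OF P, of C] by (cases "C \<in> \<xi>") auto
  qed
  define S where "S = insert None (Some ` \<xi>)"
  have finS: "finite S" using fin\<xi> by (simp add: S_def)
  have \<zeta>r: "range \<zeta> \<subseteq> S" using lab_in[OF P] by (auto simp: \<zeta>y S_def)
  have fr\<zeta>: "finite (range \<zeta>)" using finite_subset[OF \<zeta>r finS] .
  have s\<zeta>: "simple_function M \<zeta>"
    using sf_comp[of \<zeta> "\<lambda>x. x", OF fr\<zeta> \<zeta>v] by simp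
  have s\<zeta>g: "simple_function M (\<lambda>x. \<zeta> (g i x))" for i
    by (rule sf_comp[OF fr\<zeta> \<zeta>v gB])
  have H\<zeta>g: "Ent (\<lambda>x. \<zeta> (g i x)) = Ent \<zeta>" for i
  proof -
    have r: "range (\<lambda>x. \<zeta> (g i x)) \<subseteq> S" using \<zeta>r by auto
    have "Ent (\<lambda>x. \<zeta> (g i x)) = - (\<Sum>v\<in>S. prob ((\<lambda>x. \<zeta> (g i x)) -` {v}) * ln (prob ((\<lambda>x. \<zeta> (g i x)) -` {v})))"
      by (rule ent_eq_sum[OF s\<zeta>g r finS])
    also have "\<dots> = - (\<Sum>v\<in>S. prob (\<zeta> -` {v}) * ln (prob (\<zeta> -` {v})))"
    proof -
      have "prob ((\<lambda>x. \<zeta> (g i x)) -` {v}) = prob (\<zeta> -` {v})" for v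
      proof -
        have "(\<lambda>x. \<zeta> (g i x)) -` {v} = g i -` (\<zeta> -` {v})" by auto
        then show ?thesis using gI[OF \<zeta>v] by simp
      qed
      then show ?thesis by simp
    qed
    also have "\<dots> = Ent \<zeta>" by (rule ent_eq_sum[OF s\<zeta> \<zeta>r finS, symmetric])
    finally show ?thesis .
  qed
  have frlab: "finite (range (lab \<xi>))" using lab_in[OF P] fin\<xi> by (intro finite_subset[OF _ fin\<xi>]) auto
  have labv: "lab \<xi> -` {v} \<in> sets borel" for v using lab_vimage[OF P, of v] Cb by auto
  have slab: "simple_function M (\<lambda>x. lab \<xi> (g i x))" for i
    by (rule sf_comp[OF frlab labv gB])
  define Xv where "Xv x = restrict (\<lambda>i. lab \<xi> (g i x)) I" for x
  define Zv where "Zv x = restrict (\<lambda>i. \<zeta> (g i x)) I" for x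
  have sX: "simple_function M Xv"
    using ent_vec[of "\<lambda>i x. lab \<xi> (g i x)" n] slab unfolding Xv_def I_def by blast
  have vZ: "simple_function M Zv \<and> Ent Zv \<le> (\<Sum>i=1..n. Ent (\<lambda>x. \<zeta> (g i x)))"
    using ent_vec[of "\<lambda>i x. \<zeta> (g i x)" n] s\<zeta>g unfolding Zv_def I_def by blast
  have sZ: "simple_function M Zv" using vZ by blast
  have HZ: "Ent Zv \<le> real n * Ent \<zeta>" using vZ H\<zeta>g by simp
  have Ueq: "B0 \<union> B C = - (\<Union>C'\<in>\<xi> - {C}. B C')" if C: "C \<in> \<xi>" for C
  proof
    show "B0 \<union> B C \<subseteq> - (\<Union>C'\<in>\<xi> - {C}. B C')"
    proof
      fix x assume x: "x \<in> B0 \<union> B C"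
      show "x \<in> - (\<Union>C'\<in>\<xi> - {C}. B C')"
      proof
        assume "x \<in> (\<Union>C'\<in>\<xi> - {C}. B C')"
        then obtain C' where C': "C' \<in> \<xi>" "C' \<noteq> C" "x \<in> B C'" by blast
        show False
        proof (cases "x \<in> B0")
          case True then show False using C' by (auto simp: B0)
        next
          case False
          then have "x \<in> C" using x Bs[OF C] by auto
          moreover have "x \<in> C'" using C' Bs by auto
          ultimately show False using lab_eq[OF P C] lab_eq[OF P C'(1)] C'(2) by metis
        qed
      qed
    qed
    show "- (\<Union>C'\<in>\<xi> - {C}. B C') \<subseteq> B0 \<union> B C"
    proof
      fix x assume x: "x \<in> - (\<Union>C'\<in>\<xi> - {C}. B C')"
      show "x \<in> B0 \<union> B C"
      proof (cases "x \<in> B0")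
        case True then show ?thesis by simp
      next
        case False
        then obtain C'' where "C'' \<in> \<xi>" "x \<in> B C''" by (auto simp: B0)
        then have "C'' = C" using x by auto
        then show ?thesis using \<open>x \<in> B C''\<close> by simp
      qed
    qed
  qed
  have Uopen: "\<forall>W\<in>U. open W"
  proof
    fix W assume "W \<in> U"
    then obtain C where C: "C \<in> \<xi>" "W = B0 \<union> B C" by (auto simp: U_def)
    have "closed (\<Union>C'\<in>\<xi> - {C}. B C')" using fin\<xi> Bc by (intro closed_UN) auto
    then have "open (- (\<Union>C'\<in>\<xi> - {C}. B C'))" by (rule open_Compl)
    then show "open W" unfolding C(2) Ueq[OF C(1)] .
  qed
  have Ucov: "\<Union>U = UNIV"
  proof -
    have "x \<in> \<Union>U" for x
    proof (cases "x \<in> B0")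
      case True
      obtain C where "C \<in> \<xi>" using cov by blast
      then show ?thesis using True by (auto simp: U_def)
    next
      case False
      then obtain C where "C \<in> \<xi>" "x \<in> B C" by (auto simp: B0)
      then show ?thesis by (auto simp: U_def)
    qed
    then show ?thesis by blast
  qed
  have finU: "finite U" using fin\<xi> by (simp add: U_def)
  define Jc where "Jc = join_fam (\<lambda>i. preimage_coll (g i) U) I"
  define N where "N = min_subcover_card Jc"
  have finJc: "finite Jc" unfolding Jc_def by (rule join_pre_finite[OF finI finU])
  have covJc: "\<Union>Jc = UNIV" unfolding Jc_def by (rule join_pre_cover[OF Ucov])
  have openJc: "open D" if "D \<in> Jc" for D
    by (rule join_pre_open[where h=g, OF finI Uopen gC]) (use that in \<open>simp add: Jc_def\<close>)
  obtain V where V: "V \<subseteq> Jc" "\<Union>V = UNIV" "card V = N"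
    using min_subcover_obtain[OF finJc covJc] unfolding N_def by blast
  have finV: "finite V" using finite_subset[OF V(1) finJc] .
  obtain e where e: "bij_betw e {0..<N} V" using ex_bij_betw_nat_finite[OF finV] V(3) by metis
  have eV: "e ` {0..<N} = V" using e by (simp add: bij_betw_def)
  define \<alpha>l where "\<alpha>l x = (LEAST j. j < N \<and> x \<in> e j)" for x
  have \<alpha>1: "\<alpha>l x < N \<and> x \<in> e (\<alpha>l x)" for x
  proof -
    have "x \<in> \<Union>V" using V(2) by simp
    then obtain W where "W \<in> V" "x \<in> W" by blast
    then obtain j where "j < N" "x \<in> e j" using eV by auto
    then have "\<exists>j. j < N \<and> x \<in> e j" by blast
    then show ?thesis unfolding \<alpha>l_def by (rule LeastI_ex)
  qed
  have eJ: "e j \<in> Jc" if "j < N" for j using eV V(1) that by auto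
  have \<alpha>meas: "\<alpha>l \<in> measurable M (count_space UNIV)"
    unfolding \<alpha>l_def
  proof (rule measurable_Least)
    fix j
    have "{x \<in> space M. j < N \<and> x \<in> e j} \<in> sets M"
    proof (cases "j < N")
      case True
      then have "{x \<in> space M. j < N \<and> x \<in> e j} = e j" by (auto simp: spM)
      then show ?thesis using openJc[OF eJ[OF True]] sb by simp
    next
      case False then show ?thesis by simp
    qed
    then show "(\<lambda>x. j < N \<and> x \<in> e j) \<in> measurable M (count_space UNIV)"
      using pred_def by blast
  qed
  have s\<alpha>: "simple_function M \<alpha>l"
    unfolding simple_function_def
  proof
    show "finite (\<alpha>l ` space M)" by (rule finite_subset[of _ "{..<N}"]) (use \<alpha>1 in auto)
    show "\<forall>v\<in>\<alpha>l ` space M. \<alpha>l -` {v} \<inter> space M \<in> sets M"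
      using measurable_sets[OF \<alpha>meas] by simp
  qed
  have H\<alpha>: "Ent \<alpha>l \<le> ln (real N)"
    using ent_le_card[OF s\<alpha>, of N] \<alpha>1 by (auto simp: log_def)
  have det: "Xv x = Xv x'" if eq: "\<alpha>l x = \<alpha>l x'" "Zv x = Zv x'" for x x'
  proof -
    define Vx where "Vx = e (\<alpha>l x)"
    have VJ: "Vx \<in> Jc" unfolding Vx_def using eJ \<alpha>1 by blast
    have xV: "x \<in> Vx" "x' \<in> Vx" unfolding Vx_def using \<alpha>1[of x] \<alpha>1[of x'] eq(1) by auto
    have VJ': "Vx \<in> join_fam (\<lambda>i. preimage_coll (g i) U) I" using VJ by (simp add: Jc_def)
    obtain W where W: "\<forall>i\<in>I. W i \<in> U" "Vx = (\<Inter>i\<in>I. g i -` W i)"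
      using join_pre_D[OF VJ'] by (elim exE conjE)
    have "lab \<xi> (g i x) = lab \<xi> (g i x')" if i: "i \<in> I" for i
    proof -
      obtain C where C: "C \<in> \<xi>" "W i = B0 \<union> B C" using W(1) i by (auto simp: U_def)
      have gx: "g i x \<in> B0 \<union> B C" "g i x' \<in> B0 \<union> B C" using xV W(2) C(2) i by auto
      have z: "\<zeta> (g i x) = \<zeta> (g i x')" using eq(2) i unfolding Zv_def restrict_eq_iff by blast
      show ?thesis
      proof (cases "g i x \<in> B0")
        case True
        then show ?thesis using z by (auto simp: \<zeta>y split: if_splits)
      next
        case False
        then have F': "g i x' \<notin> B0" using z by (auto simp: \<zeta>y split: if_splits)
        have "g i x \<in> C" "g i x' \<in> C" using gx False F' Bs[OF C(1)] by auto
        then show ?thesis using lab_eq[OF P C(1)] by simp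
      qed
    qed
    then show ?thesis unfolding Xv_def restrict_eq_iff by blast
  qed
  define Pr where "Pr x = (\<alpha>l x, Zv x)" for x
  define F where "F p = Xv (SOME x. Pr x = p)" for p
  have XF: "Xv = F \<circ> Pr"
  proof
    fix x
    define x' where "x' = (SOME x'. Pr x' = Pr x)"
    have ex: "\<exists>x'. Pr x' = Pr x" by (rule exI[of _ x]) (rule refl)
    have "Pr x' = Pr x" unfolding x'_def by (rule someI_ex[OF ex])
    then have "\<alpha>l x' = \<alpha>l x" "Zv x' = Zv x" by (simp_all add: Pr_def)
    then have "Xv x' = Xv x" by (rule det)
    then show "Xv x = (F \<circ> Pr) x" by (simp add: F_def x'_def)
  qed
  have sP: "simple_function M Pr" unfolding Pr_def using s\<alpha> sZ by (rule simple_function_Pair)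
  have "Ent Xv = Ent (F \<circ> Pr)" using XF by simp
  also have "\<dots> \<le> Ent Pr" by (rule entropy_data_processing[OF sP])
  also have "\<dots> \<le> Ent \<alpha>l + Ent Zv" unfolding Pr_def by (rule ent_pair_le[OF s\<alpha> sZ])
  also have "\<dots> \<le> ln (real N) + real n * Ent \<zeta>" using H\<alpha> HZ by linarith
  finally have HX: "Ent Xv \<le> ln (real N) + real n * Ent \<zeta>" .
  define J where "J = join_fam (\<lambda>i. preimage_coll (g i) \<xi>) I"
  have fib: "Xv -` {Xv x0} = (\<Inter>i\<in>I. g i -` lab \<xi> (g i x0))" for x0
  proof -
    have "Xv y = Xv x0 \<longleftrightarrow> (\<forall>i\<in>I. g i y \<in> lab \<xi> (g i x0))" for y
    proof -
      have "Xv y = Xv x0 \<longleftrightarrow> (\<forall>i\<in>I. lab \<xi> (g i y) = lab \<xi> (g i x0))"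
        unfolding Xv_def restrict_eq_iff ..
      also have "\<dots> \<longleftrightarrow> (\<forall>i\<in>I. g i y \<in> lab \<xi> (g i x0))"
        using lab_in[OF P] lab_eq[OF P] by metis
      finally show ?thesis .
    qed
    then show ?thesis by auto
  qed
  have Jeq: "J - {{}} = (\<lambda>v. Xv -` {v}) ` range Xv"
  proof
    show "J - {{}} \<subseteq> (\<lambda>v. Xv -` {v}) ` range Xv"
    proof
      fix D assume D: "D \<in> J - {{}}"
      have DJ: "D \<in> join_fam (\<lambda>i. preimage_coll (g i) \<xi>) I" using D by (simp add: J_def)
      obtain W where W: "\<forall>i\<in>I. W i \<in> \<xi>" "D = (\<Inter>i\<in>I. g i -` W i)"
        using join_pre_D[OF DJ] by (elim exE conjE)
      obtain x0 where x0: "x0 \<in> D" using D by blast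
      have "lab \<xi> (g i x0) = W i" if "i \<in> I" for i
        using lab_eq[OF P] W x0 that by blast
      then have "D = (\<Inter>i\<in>I. g i -` lab \<xi> (g i x0))" unfolding W(2) by (intro INF_cong) auto
      then have "D = Xv -` {Xv x0}" using fib by simp
      then show "D \<in> (\<lambda>v. Xv -` {v}) ` range Xv" by (rule image_eqI[where f="\<lambda>v. Xv -` {v}"]) simp
    qed
    show "(\<lambda>v. Xv -` {v}) ` range Xv \<subseteq> J - {{}}"
    proof
      fix D assume "D \<in> (\<lambda>v. Xv -` {v}) ` range Xv"
      then obtain x0 where D: "D = Xv -` {Xv x0}" by blast
      have "(\<Inter>i\<in>I. g i -` lab \<xi> (g i x0)) \<in> J"
        unfolding J_def by (rule join_pre_I) (use lab_in[OF P] in blast)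
      then have "D \<in> J" using D fib[of x0] by simp
      moreover have "x0 \<in> D" using D by simp
      ultimately show "D \<in> J - {{}}" by blast
    qed
  qed
  have inj: "inj_on (\<lambda>v. Xv -` {v}) (range Xv)"
  proof (rule inj_onI)
    fix v w assume "v \<in> range Xv" "w \<in> range Xv" and eqvw: "Xv -` {v} = Xv -` {w}"
    then obtain x where "v = Xv x" by blast
    then have "x \<in> Xv -` {w}" using eqvw by auto
    then show "v = w" using \<open>v = Xv x\<close> by simp
  qed
  have finJ: "finite J" unfolding J_def by (rule join_pre_finite[OF finI fin\<xi>])
  have finR: "finite (range Xv)" using sX by (simp add: simple_function_def spM)
  have "(\<Sum>D\<in>J. measure M D * ln (measure M D)) = (\<Sum>D\<in>J - {{}}. measure M D * ln (measure M D))"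
    by (rule sum.mono_neutral_right[OF finJ]) auto
  also have "\<dots> = (\<Sum>v\<in>range Xv. prob (Xv -` {v}) * ln (prob (Xv -` {v})))"
    unfolding Jeq by (subst sum.reindex[OF inj]) simp
  finally have "part_entropy M J = Ent Xv"
    unfolding part_entropy_def using ent_eq_sum[OF sX subset_refl finR] by simp
  then have "part_entropy M J \<le> ln (real N) + real n * Ent \<zeta>" using HX by simp
  then show ?thesis unfolding J_def N_def Jc_def U_def g_def I_def .
qed

lemma U_cover:
  fixes \<xi> :: "'a set set" and B :: "'a set \<Rightarrow> 'a set" and B0 :: "'a set"
  assumes P: "finite_borel_partition \<xi>"
    and Bc: "\<And>C. C \<in> \<xi> \<Longrightarrow> closed (B C)" and Bs: "\<And>C. C \<in> \<xi> \<Longrightarrow> B C \<subseteq> C"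
    and B0: "B0 = UNIV - (\<Union>C\<in>\<xi>. B C)"
  shows "finite_open_cover ((\<lambda>C. B0 \<union> B C) ` \<xi>)"
proof -
  define U where "U = (\<lambda>C. B0 \<union> B C) ` \<xi>"
  have fin\<xi>: "finite \<xi>" and cov: "\<Union>\<xi> = UNIV"
    using P by (auto simp: finite_borel_partition_def)
  have Ueq: "B0 \<union> B C = - (\<Union>C'\<in>\<xi> - {C}. B C')" if C: "C \<in> \<xi>" for C
  proof
    show "B0 \<union> B C \<subseteq> - (\<Union>C'\<in>\<xi> - {C}. B C')"
    proof
      fix x assume x: "x \<in> B0 \<union> B C"
      show "x \<in> - (\<Union>C'\<in>\<xi> - {C}. B C')"
      proof
        assume "x \<in> (\<Union>C'\<in>\<xi> - {C}. B C')"
        then obtain C' where C': "C' \<in> \<xi>" "C' \<noteq> C" "x \<in> B C'" by blast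
        show False
        proof (cases "x \<in> B0")
          case True then show False using C' by (auto simp: B0)
        next
          case False
          then have "x \<in> C" using x Bs[OF C] by auto
          moreover have "x \<in> C'" using C' Bs by auto
          ultimately show False using lab_eq[OF P C] lab_eq[OF P C'(1)] C'(2) by metis
        qed
      qed
    qed
    show "- (\<Union>C'\<in>\<xi> - {C}. B C') \<subseteq> B0 \<union> B C"
    proof
      fix x assume x: "x \<in> - (\<Union>C'\<in>\<xi> - {C}. B C')"
      show "x \<in> B0 \<union> B C"
      proof (cases "x \<in> B0")
        case True then show ?thesis by simp
      next
        case False
        then obtain C'' where "C'' \<in> \<xi>" "x \<in> B C''" by (auto simp: B0)
        then have "C'' = C" using x by auto
        then show ?thesis using \<open>x \<in> B C''\<close> by simp
      qed
    qed
  qed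
  have Uopen: "\<forall>W\<in>U. open W"
  proof
    fix W assume "W \<in> U"
    then obtain C where C: "C \<in> \<xi>" "W = B0 \<union> B C" by (auto simp: U_def)
    have "closed (\<Union>C'\<in>\<xi> - {C}. B C')" using fin\<xi> Bc by (intro closed_UN) auto
    then have "open (- (\<Union>C'\<in>\<xi> - {C}. B C'))" by (rule open_Compl)
    then show "open W" unfolding C(2) Ueq[OF C(1)] .
  qed
  have Ucov: "\<Union>U = UNIV"
  proof -
    have "x \<in> \<Union>U" for x
    proof (cases "x \<in> B0")
      case True
      obtain C where "C \<in> \<xi>" using cov by blast
      then show ?thesis using True by (auto simp: U_def)
    next
      case False
      then obtain C where "C \<in> \<xi>" "x \<in> B C" by (auto simp: B0)
      then show ?thesis by (auto simp: U_def)
    qed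
    then show ?thesis by blast
  qed
  have finU: "finite U" using fin\<xi> by (simp add: U_def)
  show ?thesis unfolding finite_open_cover_def U_def[symmetric] using finU Uopen Ucov by blast
qed

lemma zeta_bound:
  fixes \<xi> :: "'a set set" and B :: "'a set \<Rightarrow> 'a set" and B0 :: "'a set"
    and \<zeta> :: "'a \<Rightarrow> 'a set option" and \<delta> :: real
  assumes P: "finite_borel_partition \<xi>"
    and Bc: "\<And>C. C \<in> \<xi> \<Longrightarrow> closed (B C)"
    and B0: "B0 = UNIV - (\<Union>C\<in>\<xi>. B C)"
    and \<zeta>: "\<zeta> = (\<lambda>y. if y \<in> B0 then Some (lab \<xi> y) else None)"
    and pB0: "prob B0 \<le> \<delta>"
  shows "Ent \<zeta> \<le> 2 * real (card \<xi>) * sqrt \<delta> + \<delta>"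
proof -
  have fin\<xi>: "finite \<xi>" and Cb: "\<And>C. C \<in> \<xi> \<Longrightarrow> C \<in> sets borel"
    using P by (auto simp: finite_borel_partition_def)
  have \<zeta>y: "\<And>y. \<zeta> y = (if y \<in> B0 then Some (lab \<xi> y) else None)" using \<zeta> by simp
  have clU: "closed (\<Union>C\<in>\<xi>. B C)" using fin\<xi> Bc by (intro closed_UN) auto
  have B0eq: "B0 = - (\<Union>C\<in>\<xi>. B C)" unfolding B0 by blast
  have B0b: "B0 \<in> sets borel" unfolding B0eq using open_Compl[OF clU] by (rule borel_open)
  have vN: "\<zeta> -` {None} = UNIV - B0"
  proof (rule set_eqI)
    fix y show "y \<in> \<zeta> -` {None} \<longleftrightarrow> y \<in> UNIV - B0" by (simp add: \<zeta>y)
  qed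
  have vS: "\<zeta> -` {Some C} = B0 \<inter> lab \<xi> -` {C}" for C
  proof (rule set_eqI)
    fix y show "y \<in> \<zeta> -` {Some C} \<longleftrightarrow> y \<in> B0 \<inter> lab \<xi> -` {C}" by (simp add: \<zeta>y)
  qed
  have \<zeta>v: "\<zeta> -` {v} \<in> sets borel" for v
  proof (cases v)
    case None
    then show ?thesis using vN B0b by simp
  next
    case (Some C)
    then show ?thesis using vS[of C] B0b Cb lab_vimage[OF P, of C] by (cases "C \<in> \<xi>") auto
  qed
  define S where "S = insert None (Some ` \<xi>)"
  have finS: "finite S" using fin\<xi> by (simp add: S_def)
  have \<zeta>r: "range \<zeta> \<subseteq> S" using lab_in[OF P] by (auto simp: \<zeta>y S_def)
  have fr\<zeta>: "finite (range \<zeta>)" using finite_subset[OF \<zeta>r finS] .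
  have s\<zeta>: "simple_function M \<zeta>"
    using sf_comp[of \<zeta> "\<lambda>x. x", OF fr\<zeta> \<zeta>v] by simp
  define \<phi> where "\<phi> t = - (t * ln t)" for t :: real
  have "Ent \<zeta> = - (\<Sum>v\<in>S. prob (\<zeta> -` {v}) * ln (prob (\<zeta> -` {v})))"
    by (rule ent_eq_sum[OF s\<zeta> \<zeta>r finS])
  also have "\<dots> = (\<Sum>v\<in>S. \<phi> (prob (\<zeta> -` {v})))"
    by (simp add: \<phi>_def sum_negf)
  also have "\<dots> = \<phi> (prob (\<zeta> -` {None})) + (\<Sum>C\<in>\<xi>. \<phi> (prob (\<zeta> -` {Some C})))"
    unfolding S_def using fin\<xi> by (simp add: sum.reindex)
  also have "\<dots> \<le> \<delta> + (\<Sum>C\<in>\<xi>. 2 * sqrt \<delta>)"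
  proof (rule add_mono)
    have p0: "prob (\<zeta> -` {None}) = 1 - prob B0"
      unfolding vN using prob_compl[of B0] B0b sb spM by simp
    have "\<phi> (prob (\<zeta> -` {None})) \<le> prob B0"
      unfolding p0 \<phi>_def by (rule phi_near1) auto
    then show "\<phi> (prob (\<zeta> -` {None})) \<le> \<delta>" using pB0 by linarith
    show "(\<Sum>C\<in>\<xi>. \<phi> (prob (\<zeta> -` {Some C}))) \<le> (\<Sum>C\<in>\<xi>. 2 * sqrt \<delta>)"
    proof (rule sum_mono)
      fix C assume C: "C \<in> \<xi>"
      have "\<zeta> -` {Some C} \<subseteq> B0" using vS[of C] by blast
      then have q: "prob (\<zeta> -` {Some C}) \<le> prob B0"
        using B0b sb by (intro finite_measure_mono) auto
      have "\<phi> (prob (\<zeta> -` {Some C})) \<le> 2 * sqrt (prob (\<zeta> -` {Some C}))"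
        unfolding \<phi>_def by (rule phi_small) simp
      also have "\<dots> \<le> 2 * sqrt \<delta>" using q pB0 by simp
      finally show "\<phi> (prob (\<zeta> -` {Some C})) \<le> 2 * sqrt \<delta>" .
    qed
  qed
  also have "\<dots> = 2 * real (card \<xi>) * sqrt \<delta> + \<delta>" by simp
  finally show ?thesis .
qed

end

theorem theorem3p7:
  fixes f :: "nat \<Rightarrow> 'a::metric_space \<Rightarrow> 'a"
    and \<mu> :: "'a measure"
    and a :: "nat \<Rightarrow> nat"
  assumes "compact (UNIV :: 'a set)"
    and "finite_covering_dim TYPE('a)"
    and "\<And>n. continuous_on UNIV (f n)"
    and "sets \<mu> = sets borel"
    and "prob_space \<mu>"
    and "\<And>n B. B \<in> sets borel \<Longrightarrow> measure \<mu> (f n -` B) = measure \<mu> B"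
    and "strict_mono_on {1..} a"
  shows "top_seq_entropy a f \<ge> meas_seq_entropy a \<mu> f"
proof -
  have loc: "seqent \<mu> f"
    unfolding seqent_def seqent_axioms_def information_space_def information_space_axioms_def
    using assms(3-6) by simp
  interpret seqent \<mu> f by (rule loc)
  have sb: "sets \<mu> = sets borel" by (rule assms(4))
  have fm: "finite_measure \<mu>" by (rule finite_measure_axioms)
  show ?thesis unfolding meas_seq_entropy_def
  proof (rule SUP_least)
    fix \<xi> :: "'a set set" assume "\<xi> \<in> {\<xi>. finite_borel_partition \<xi>}"
    then have P: "finite_borel_partition \<xi>" by simp
    have fin\<xi>: "finite \<xi>" and Cb: "\<And>C. C \<in> \<xi> \<Longrightarrow> C \<in> sets borel" and cov: "\<Union>\<xi> = UNIV"
      using P by (auto simp: finite_borel_partition_def)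
    have "\<xi> \<noteq> {}" using cov by auto
    then have kpos: "card \<xi> > 0" using fin\<xi> by (simp add: card_gt_0_iff)
    define k where "k = real (card \<xi>)"
    have k1: "k \<ge> 1" using kpos by (simp add: k_def)
    show "limsup (\<lambda>n. ereal (part_entropy \<mu> (join_fam (\<lambda>i. preimage_coll (fcomp f 0 (a i)) \<xi>) {1..n}) / real n))
          \<le> top_seq_entropy a f"
    proof (rule ereal_le_epsilon2)
      fix \<epsilon> :: real assume \<epsilon>: "0 < \<epsilon>"
      define \<delta> where "\<delta> = min 1 ((\<epsilon> / (2 * k + 1))\<^sup>2)"
      have \<delta>pos: "\<delta> > 0" using \<epsilon> k1 by (simp add: \<delta>_def)
      have \<delta>1: "\<delta> \<le> 1" by (simp add: \<delta>_def)
      have dk: "\<delta> / k > 0" using \<delta>pos k1 by simp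
      have "\<forall>C\<in>\<xi>. \<exists>F. closed F \<and> F \<subseteq> C \<and> measure \<mu> (C - F) < \<delta> / k"
        using closed_inner[OF fm sb Cb dk] by blast
      then obtain B where B: "\<And>C. C \<in> \<xi> \<Longrightarrow> closed (B C) \<and> B C \<subseteq> C \<and> measure \<mu> (C - B C) < \<delta> / k"
        by metis
      have Bc: "\<And>C. C \<in> \<xi> \<Longrightarrow> closed (B C)" and Bs: "\<And>C. C \<in> \<xi> \<Longrightarrow> B C \<subseteq> C"
        using B by auto
      define B0 where "B0 = UNIV - (\<Union>C\<in>\<xi>. B C)"
      define \<zeta> where "\<zeta> = (\<lambda>y. if y \<in> B0 then Some (lab \<xi> y) else None)"
      have B0sub: "B0 \<subseteq> (\<Union>C\<in>\<xi>. C - B C)"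
      proof
        fix x assume x: "x \<in> B0"
        obtain C where "C \<in> \<xi>" "x \<in> C" using cov by blast
        then show "x \<in> (\<Union>C\<in>\<xi>. C - B C)" using x by (auto simp: B0_def)
      qed
      have CBs: "C - B C \<in> sets \<mu>" if "C \<in> \<xi>" for C
        using Cb[OF that] Bc[OF that] sb by auto
      have "prob B0 \<le> prob (\<Union>C\<in>\<xi>. C - B C)"
        by (rule finite_measure_mono[OF B0sub]) (use fin\<xi> CBs in auto)
      also have "\<dots> \<le> (\<Sum>C\<in>\<xi>. prob (C - B C))"
        by (rule measure_UNION_le[OF fin\<xi>]) (use CBs in auto)
      also have "\<dots> \<le> (\<Sum>C\<in>\<xi>. \<delta> / k)"
        by (rule sum_mono) (use B in \<open>auto intro: less_imp_le\<close>)
      also have "\<dots> = \<delta>" using k1 by (simp add: k_def)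
      finally have pB0: "prob B0 \<le> \<delta>" .
      have H\<zeta>: "Ent \<zeta> \<le> 2 * k * sqrt \<delta> + \<delta>"
        using zeta_bound[OF P Bc B0_def \<zeta>_def pB0] by (simp add: k_def)
      have sq: "sqrt \<delta> \<le> \<epsilon> / (2 * k + 1)"
      proof -
        have "\<delta> \<le> (\<epsilon> / (2 * k + 1))\<^sup>2" by (simp add: \<delta>_def)
        then have "sqrt \<delta> \<le> sqrt ((\<epsilon> / (2 * k + 1))\<^sup>2)" by (rule real_sqrt_le_mono)
        also have "\<dots> = \<epsilon> / (2 * k + 1)" using \<epsilon> k1 by simp
        finally show ?thesis .
      qed
      have dsq: "\<delta> \<le> sqrt \<delta>"
      proof -
        have "\<delta> = sqrt \<delta> * sqrt \<delta>" using \<delta>pos by simp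
        also have "\<dots> \<le> sqrt \<delta> * 1" using \<delta>1 \<delta>pos by (intro mult_left_mono) auto
        finally show ?thesis by simp
      qed
      have "2 * k * sqrt \<delta> + \<delta> \<le> (2 * k + 1) * sqrt \<delta>" using dsq by (simp add: algebra_simps)
      also have "\<dots> \<le> (2 * k + 1) * (\<epsilon> / (2 * k + 1))" using sq k1 by (intro mult_left_mono) auto
      also have "\<dots> = \<epsilon>" using k1 by simp
      finally have H\<zeta>\<epsilon>: "Ent \<zeta> \<le> \<epsilon>" using H\<zeta> by linarith
      define U where "U = (\<lambda>C. B0 \<union> B C) ` \<xi>"
      have Ufoc: "finite_open_cover U" unfolding U_def by (rule U_cover[OF P Bc Bs B0_def])
      have bound: "part_entropy \<mu> (join_fam (\<lambda>i. preimage_coll (fcomp f 0 (a i)) \<xi>) {1..n})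
          \<le> ln (real (min_subcover_card (join_fam (\<lambda>i. preimage_coll (fcomp f 0 (a i)) U) {1..n}))) + real n * \<epsilon>" for n
      proof -
        have "real n * Ent \<zeta> \<le> real n * \<epsilon>" using H\<zeta>\<epsilon> by (intro mult_left_mono) auto
        then show ?thesis using main_ineq[OF P Bc Bs B0_def \<zeta>_def, of a n] unfolding U_def by linarith
      qed
      have "limsup (\<lambda>n. ereal (part_entropy \<mu> (join_fam (\<lambda>i. preimage_coll (fcomp f 0 (a i)) \<xi>) {1..n}) / real n))
          \<le> limsup (\<lambda>n. ereal (ln (real (min_subcover_card (join_fam (\<lambda>i. preimage_coll (fcomp f 0 (a i)) U) {1..n}))) / real n)) + ereal \<epsilon>"
        by (rule limsup_step[OF bound]) (use \<epsilon> in simp)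
      also have "\<dots> \<le> top_seq_entropy a f + ereal \<epsilon>"
      proof (rule add_right_mono)
        show "limsup (\<lambda>n. ereal (ln (real (min_subcover_card (join_fam (\<lambda>i. preimage_coll (fcomp f 0 (a i)) U) {1..n}))) / real n))
          \<le> top_seq_entropy a f"
          unfolding top_seq_entropy_def by (rule SUP_upper) (use Ufoc in simp)
      qed
      finally show "limsup (\<lambda>n. ereal (part_entropy \<mu> (join_fam (\<lambda>i. preimage_coll (fcomp f 0 (a i)) \<xi>) {1..n}) / real n))
          \<le> top_seq_entropy a f + ereal \<epsilon>" .
    qed
  qed
qed


end
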